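(* Let $f:M\to M$ be a continuous map of a compact metric space and $\{\phi_n\}$ a subadditive sequence of continuous functions with $|\phi_n(x)|/n\le L$ for $\nu$-a.e. $x$, all $n$ and all $\nu\in\mathcal M_f$, for some $L>0$; let $\Phi=\inf_n\phi_n/n$ be its rate of growth. Fix $\epsilon>0$ and, for $N>0$, let $\mathcal M_N=\{\nu\in\mathcal M_f:\int\frac{\phi_n}{n}d\nu<\int\Phi\,d\nu+\epsilon\ \text{for all } n\ge N\}$ and $P_N(\phi)=\sup_{\nu\in\mathcal M_N}\{h(\nu)+\int\phi\,d\nu\}$. Then for every $N>0$, $$\lim_{n\to\infty}P_N\!\left(\frac{\phi_n}{n}\right)=\inf_{n>0}P_N\!\left(\frac{\phi_n}{n}\right).$$
   Context: $\mathcal M_f$ is the set of $f$-invariant Borel probability measures, $h(\nu)$ the metric entropy. Subadditive: $\phi_{n+m}\le\phi_n+\phi_m\circ f^n$. By Kingman's theorem $\Phi=\inf_n\phi_n/n=\lim_n\phi_n/n$ $\nu$-a.e. for every $\nu\in\mathcal M_f$. *)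

theory Defs
  imports "HOL-Probability.Probability"
begin

definition invariant_measures :: "'a::metric_space set \<Rightarrow> ('a \<Rightarrow> 'a) \<Rightarrow> 'a measure set" where
  "invariant_measures M f = {\<nu>. prob_space \<nu> \<and> sets \<nu> = sets (restrict_space borel M)
      \<and> f \<in> measurable \<nu> \<nu> \<and> distr \<nu> \<nu> f = \<nu>}"

definition finite_partitions :: "'a measure \<Rightarrow> 'a set set set" where
  "finite_partitions \<nu> = {P. finite P \<and> P \<subseteq> sets \<nu> \<and> \<Union>P = space \<nu>
      \<and> (\<forall>A\<in>P. \<forall>B\<in>P. A \<noteq> B \<longrightarrow> A \<inter> B = {})}"

definition partition_entropy :: "'a measure \<Rightarrow> 'a set set \<Rightarrow> real" where
  "partition_entropy \<nu> P = - (\<Sum>A\<in>P. measure \<nu> A * ln (measure \<nu> A))"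

definition iter_join :: "'a measure \<Rightarrow> ('a \<Rightarrow> 'a) \<Rightarrow> 'a set set \<Rightarrow> nat \<Rightarrow> 'a set set" where
  "iter_join \<nu> f P n = {space \<nu> \<inter> (\<Inter>i<n. (f ^^ i) -` c i) | c. \<forall>i<n. c i \<in> P}"

definition entropy_partition_map :: "'a measure \<Rightarrow> ('a \<Rightarrow> 'a) \<Rightarrow> 'a set set \<Rightarrow> real" where
  "entropy_partition_map \<nu> f P = lim (\<lambda>n. partition_entropy \<nu> (iter_join \<nu> f P n) / real n)"

definition metric_entropy :: "'a measure \<Rightarrow> ('a \<Rightarrow> 'a) \<Rightarrow> ereal" where
  "metric_entropy \<nu> f = (SUP P\<in>finite_partitions \<nu>. ereal (entropy_partition_map \<nu> f P))"

text \<open>Rate of growth \<Phi> = inf_n \<phi>_n / n (set to 0 where the infimum is -\<infinity>, a null set).\<close>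
definition growth_rate :: "(nat \<Rightarrow> 'a \<Rightarrow> real) \<Rightarrow> 'a \<Rightarrow> real" where
  "growth_rate \<phi> x = real_of_ereal (INF n\<in>{1..}. ereal (\<phi> n x / real n))"

definition M_N :: "'a::metric_space set \<Rightarrow> ('a \<Rightarrow> 'a) \<Rightarrow> (nat \<Rightarrow> 'a \<Rightarrow> real) \<Rightarrow> real \<Rightarrow> nat \<Rightarrow> 'a measure set" where
  "M_N M f \<phi> \<epsilon> N = {\<nu>\<in>invariant_measures M f. \<forall>n\<ge>N.
      (\<integral>x. \<phi> n x / real n \<partial>\<nu>) < (\<integral>x. growth_rate \<phi> x \<partial>\<nu>) + \<epsilon>}"

definition P_N :: "'a::metric_space set \<Rightarrow> ('a \<Rightarrow> 'a) \<Rightarrow> (nat \<Rightarrow> 'a \<Rightarrow> real) \<Rightarrow> real \<Rightarrow> nat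
    \<Rightarrow> ('a \<Rightarrow> real) \<Rightarrow> ereal" where
  "P_N M f \<phi> \<epsilon> N \<psi> = (SUP \<nu>\<in>M_N M f \<phi> \<epsilon> N. metric_entropy \<nu> f + ereal (\<integral>x. \<psi> x \<partial>\<nu>))"

end

theory Submission imports Defs begin

lemma key_real:
  fixes a :: "nat \<Rightarrow> real"
  assumes sub: "\<And>n m. n>0 \<Longrightarrow> m>0 \<Longrightarrow> a (n+m) \<le> a n + a m"
    and bd: "\<And>n. n>0 \<Longrightarrow> \<bar>a n\<bar> \<le> real n * L" and k: "k>0"
  shows "n>0 \<Longrightarrow> a n \<le> real n * (a k / real k) + 2 * real k * L"
proof (induction n rule: less_induct)
  case (less n)
  have L: "L \<ge> 0" using bd[OF k] by (smt (verit) k of_nat_0_less_iff zero_le_mult_iff)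
  have ak: "\<bar>a k / real k\<bar> \<le> L" using bd[OF k] k by (simp add: divide_le_eq mult.commute abs_divide)
  show ?case
  proof (cases "n \<le> k")
    case True
    have "a n \<le> real n * L" using bd[OF less.prems] by linarith
    moreover have "real n * (a k / real k) \<ge> - (real n * L)"
    proof -
      have "- (a k / real k) \<le> L" using ak by linarith
      then have "real n * (- (a k / real k)) \<le> real n * L" by (rule mult_left_mono) auto
      then show ?thesis by simp
    qed
    moreover have "real n * L \<le> real k * L" using True L by (simp add: mult_right_mono)
    ultimately show ?thesis by linarith
  next
    case False
    then have nk: "n = k + (n-k)" "n - k > 0" "n - k < n" using k by auto
    have "a n \<le> a k + a (n-k)" using sub[OF k nk(2)] nk(1) by metis
    also have "a (n-k) \<le> real (n-k) * (a k / real k) + 2 * real k * L" using less.IH[OF nk(3) nk(2)] .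
    finally have "a n \<le> a k + real (n-k) * (a k / real k) + 2 * real k * L" by simp
    also have "a k + real (n-k) * (a k / real k) = real n * (a k / real k)"
      using k False by (simp add: of_nat_diff field_simps)
    finally show ?thesis by simp
  qed
qed

lemma inv_space: "\<nu> \<in> invariant_measures M f \<Longrightarrow> space \<nu> = M"
  unfolding invariant_measures_def by (auto dest!: sets_eq_imp_space_eq simp: space_restrict_space)

lemma inv_distr_funpow:
  assumes "\<nu> \<in> invariant_measures M f"
  shows "(f^^n) \<in> measurable \<nu> \<nu> \<and> distr \<nu> \<nu> (f^^n) = \<nu>"
proof (induction n)
  case 0 then show ?case by (simp add: id_def)
next
  case (Suc n)
  have f: "f \<in> measurable \<nu> \<nu>" "distr \<nu> \<nu> f = \<nu>" using assms unfolding invariant_measures_def by auto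
  have e: "f^^Suc n = f^^n \<circ> f" by (rule funpow_Suc_right)
  have m: "f^^n \<circ> f \<in> measurable \<nu> \<nu>" by (rule measurable_comp[OF f(1)]) (use Suc in blast)
  have "distr \<nu> \<nu> (f^^n \<circ> f) = distr (distr \<nu> \<nu> f) \<nu> (f^^n)"
    using distr_distr[of "f^^n" \<nu> \<nu> f \<nu>] Suc f by simp
  then have d: "distr \<nu> \<nu> (f^^n \<circ> f) = \<nu>" using Suc f by simp
  show ?case unfolding e using m d by blast
qed

lemma inv_meas:
  assumes "\<nu> \<in> invariant_measures M f" "continuous_on M g"
  shows "g \<in> borel_measurable \<nu>"
proof -
  have "sets \<nu> = sets (restrict_space borel M)" using assms unfolding invariant_measures_def by auto
  then show ?thesis using borel_measurable_continuous_on_restrict[OF assms(2)]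
    by (simp cong: measurable_cong_sets)
qed

lemma meas_facts:
  assumes cont: "\<And>n. n>0 \<Longrightarrow> continuous_on M (\<phi> n)"
    and sub: "\<And>n m x. n>0 \<Longrightarrow> m>0 \<Longrightarrow> x\<in>M \<Longrightarrow> \<phi> (n+m) x \<le> \<phi> n x + \<phi> m ((f^^n) x)"
    and ae: "\<And>\<nu> n. \<nu> \<in> invariant_measures M f \<Longrightarrow> n > 0 \<Longrightarrow> AE x in \<nu>. \<bar>\<phi> n x\<bar> / real n \<le> L"
    and nu: "\<nu> \<in> invariant_measures M f"
  shows "\<And>n. n>0 \<Longrightarrow> integrable \<nu> (\<phi> n)"
    and "\<And>n. n>0 \<Longrightarrow> \<bar>\<integral>x. \<phi> n x \<partial>\<nu>\<bar> \<le> real n * L"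
    and "\<And>n m. n>0 \<Longrightarrow> m>0 \<Longrightarrow> (\<integral>x. \<phi> (n+m) x \<partial>\<nu>) \<le> (\<integral>x. \<phi> n x \<partial>\<nu>) + (\<integral>x. \<phi> m x \<partial>\<nu>)"
proof -
  interpret prob_space \<nu> using nu unfolding invariant_measures_def by auto
  have sp: "space \<nu> = M" using inv_space[OF nu] .
  have meas: "\<phi> n \<in> borel_measurable \<nu>" if "n>0" for n using inv_meas[OF nu cont[OF that]] .
  have aen: "AE x in \<nu>. \<bar>\<phi> n x\<bar> \<le> real n * L" if n: "n>0" for n
    using ae[OF nu n] by eventually_elim (use n in \<open>simp add: divide_le_eq mult.commute\<close>)
  show int: "integrable \<nu> (\<phi> n)" if "n>0" for n
    by (rule integrable_const_bound[where B="real n * L"]) (use aen[OF that] meas[OF that] in auto)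
  show "\<bar>\<integral>x. \<phi> n x \<partial>\<nu>\<bar> \<le> real n * L" if n: "n>0" for n
  proof -
    have "\<bar>\<integral>x. \<phi> n x \<partial>\<nu>\<bar> \<le> (\<integral>x. \<bar>\<phi> n x\<bar> \<partial>\<nu>)"
      using integral_norm_bound[of \<nu> "\<phi> n"] by simp
    also have "\<dots> \<le> (\<integral>x. real n * L \<partial>\<nu>)"
      by (rule integral_mono_AE) (use int[OF n] aen[OF n] in auto)
    also have "\<dots> = real n * L" by (simp add: prob_space)
    finally show ?thesis .
  qed
  show "(\<integral>x. \<phi> (n+m) x \<partial>\<nu>) \<le> (\<integral>x. \<phi> n x \<partial>\<nu>) + (\<integral>x. \<phi> m x \<partial>\<nu>)"
    if n: "n>0" and m: "m>0" for n m
  proof -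
    have fm: "(f^^n) \<in> measurable \<nu> \<nu>" and dd: "distr \<nu> \<nu> (f^^n) = \<nu>"
      using inv_distr_funpow[OF nu] by auto
    have i2: "integrable \<nu> (\<lambda>x. \<phi> m ((f^^n) x))"
      using integrable_distr_eq[OF fm meas[OF m]] dd int[OF m] by simp
    have e2: "(\<integral>x. \<phi> m ((f^^n) x) \<partial>\<nu>) = (\<integral>x. \<phi> m x \<partial>\<nu>)"
      using integral_distr[OF fm meas[OF m]] dd by simp
    have "(\<integral>x. \<phi> (n+m) x \<partial>\<nu>) \<le> (\<integral>x. \<phi> n x + \<phi> m ((f^^n) x) \<partial>\<nu>)"
      by (rule integral_mono) (use int[of "n+m"] int[OF n] i2 sub[OF n m] sp n in auto)
    also have "\<dots> = (\<integral>x. \<phi> n x \<partial>\<nu>) + (\<integral>x. \<phi> m x \<partial>\<nu>)"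
      using int[OF n] i2 e2 by simp
    finally show ?thesis .
  qed
qed

theorem lemma6p2:
  fixes M :: "'a::metric_space set" and f :: "'a \<Rightarrow> 'a"
    and \<phi> :: "nat \<Rightarrow> 'a \<Rightarrow> real" and L \<epsilon> :: real
  assumes "compact M"
    and "continuous_on M f" and "f ` M \<subseteq> M"
    and "\<And>n. n > 0 \<Longrightarrow> continuous_on M (\<phi> n)"
    and "\<And>n m x. n > 0 \<Longrightarrow> m > 0 \<Longrightarrow> x \<in> M \<Longrightarrow> \<phi> (n + m) x \<le> \<phi> n x + \<phi> m ((f ^^ n) x)"
    and "L > 0"
    and "\<And>\<nu> n. \<nu> \<in> invariant_measures M f \<Longrightarrow> n > 0 \<Longrightarrow>
           AE x in \<nu>. \<bar>\<phi> n x\<bar> / real n \<le> L"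
    and "\<epsilon> > 0"
  shows "\<forall>N>0. ((\<lambda>n. P_N M f \<phi> \<epsilon> N (\<lambda>x. \<phi> n x / real n))
                  \<longlonglongrightarrow> (INF n\<in>{1..}. P_N M f \<phi> \<epsilon> N (\<lambda>x. \<phi> n x / real n)))"
proof (intro allI impI)
  fix N :: nat
  define S where "S = M_N M f \<phi> \<epsilon> N"
  define P where "P = (\<lambda>n. P_N M f \<phi> \<epsilon> N (\<lambda>x. \<phi> n x / real n))"
  have Pdef: "P n = (SUP \<nu>\<in>S. metric_entropy \<nu> f + ereal (\<integral>x. \<phi> n x / real n \<partial>\<nu>))" for n
    unfolding P_def S_def P_N_def by simp
  have Sinv: "\<nu> \<in> invariant_measures M f" if "\<nu> \<in> S" for \<nu>
    using that unfolding S_def M_N_def by auto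
  have A: "(\<integral>x. \<phi> n x / real n \<partial>\<nu>) \<le> (\<integral>x. \<phi> k x / real k \<partial>\<nu>) + 2 * real k * L / real n"
    if nu: "\<nu> \<in> S" and n: "n>0" and k: "k>0" for \<nu> n k
  proof -
    note mf = meas_facts[OF assms(4) assms(5) assms(7) Sinv[OF nu]]
    have "(\<integral>x. \<phi> n x \<partial>\<nu>) \<le> real n * ((\<integral>x. \<phi> k x \<partial>\<nu>) / real k) + 2 * real k * L"
      by (rule key_real[where a="\<lambda>n. \<integral>x. \<phi> n x \<partial>\<nu>" and L=L, OF mf(3) mf(2) k n])
    then have "(\<integral>x. \<phi> n x \<partial>\<nu>) / real n \<le> ((\<integral>x. \<phi> k x \<partial>\<nu>) / real k) + 2 * real k * L / real n"
    proof -
      assume h: "(\<integral>x. \<phi> n x \<partial>\<nu>) \<le> real n * ((\<integral>x. \<phi> k x \<partial>\<nu>) / real k) + 2 * real k * L"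
      have "(\<integral>x. \<phi> n x \<partial>\<nu>) / real n \<le> (real n * ((\<integral>x. \<phi> k x \<partial>\<nu>) / real k) + 2 * real k * L) / real n"
        by (rule divide_right_mono[OF h]) simp
      also have "\<dots> = ((\<integral>x. \<phi> k x \<partial>\<nu>) / real k) + 2 * real k * L / real n"
        using n by (simp add: add_divide_distrib)
      finally show ?thesis .
    qed
    then show ?thesis by simp
  qed
  have PB: "P n \<le> P k + ereal (2 * real k * L / real n)" if n: "n>0" and k: "k>0" for n k
    unfolding Pdef[of n]
  proof (rule SUP_least)
    fix \<nu> assume nu: "\<nu> \<in> S"
    have "metric_entropy \<nu> f + ereal (\<integral>x. \<phi> n x / real n \<partial>\<nu>)
        \<le> metric_entropy \<nu> f + ereal ((\<integral>x. \<phi> k x / real k \<partial>\<nu>) + 2 * real k * L / real n)"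
      by (rule add_left_mono) (use A[OF nu n k] in simp)
    also have "\<dots> = (metric_entropy \<nu> f + ereal (\<integral>x. \<phi> k x / real k \<partial>\<nu>)) + ereal (2 * real k * L / real n)"
      by (simp add: add.assoc)
    also have "\<dots> \<le> P k + ereal (2 * real k * L / real n)"
      by (rule add_right_mono) (unfold Pdef[of k], rule SUP_upper[OF nu])
    finally show "metric_entropy \<nu> f + ereal (\<integral>x. \<phi> n x / real n \<partial>\<nu>) \<le> P k + ereal (2 * real k * L / real n)" .
  qed
  define I where "I = (INF n\<in>{1..}. P n)"
  have "P \<longlonglongrightarrow> I"
  proof (rule order_tendstoI)
    fix y assume "y < I"
    show "\<forall>\<^sub>F n in sequentially. y < P n"
    proof (rule eventually_sequentiallyI[of 1])
      fix n :: nat assume "1 \<le> n"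
      then have "I \<le> P n" unfolding I_def by (intro INF_lower) auto
      then show "y < P n" using \<open>y < I\<close> by simp
    qed
  next
    fix y assume "I < y"
    then obtain k where k: "k \<in> {1..}" "P k < y" unfolding I_def by (auto simp: INF_less_iff)
    have k0: "k > 0" using k by auto
    show "\<forall>\<^sub>F n in sequentially. P n < y"
    proof (cases "P k")
      case (real r)
      have "(\<lambda>n. r + 2 * real k * L / real n) \<longlonglongrightarrow> r + 0"
        by (intro tendsto_add tendsto_const lim_const_over_n)
      then have "(\<lambda>n. ereal (r + 2 * real k * L / real n)) \<longlonglongrightarrow> ereal r"
        by (intro tendsto_ereal) simp
      then have ev: "\<forall>\<^sub>F n in sequentially. ereal (r + 2 * real k * L / real n) < y"
        using k(2) real by (intro order_tendstoD(2)) auto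
      show ?thesis
        using ev eventually_gt_at_top[of 0]
      proof eventually_elim
        case (elim n)
        have "P n \<le> P k + ereal (2 * real k * L / real n)" using PB[OF elim(2) k0] .
        also have "\<dots> = ereal (r + 2 * real k * L / real n)" using real by simp
        finally show ?case using elim(1) by simp
      qed
    next
      case PInf
      then show ?thesis using k(2) by simp
    next
      case MInf
      show ?thesis
      proof (rule eventually_sequentiallyI[of 1])
        fix n :: nat assume "1 \<le> n"
        have "P n \<le> P k + ereal (2 * real k * L / real n)" using PB[OF _ k0] \<open>1 \<le> n\<close> by simp
        then have "P n = -\<infinity>" using MInf by simp
        then show "P n < y" using k(2) MInf by simp
      qed
    qed
  qed
  then show "(\<lambda>n. P_N M f \<phi> \<epsilon> N (\<lambda>x. \<phi> n x / real n))
                  \<longlonglongrightarrow> (INF n\<in>{1..}. P_N M f \<phi> \<epsilon> N (\<lambda>x. \<phi> n x / real n))"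
    unfolding P_def I_def by simp
qed

end
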